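(* Let $m,n$ be positive integers, let $r_b>0$ and $r_w>0$ be real numbers, and let $R_{th0}>0$ be a real number with $R_{th0}> m r_b + n r_w$. Define the sequence $(R^{(l)}_{th})_{l\ge 0}$ by $R^{(0)}_{th}=R_{th0}$ and, for $l\ge 1$, \[ \ln\big(R^{(l)}_{th}\big) = \ln(R_{th0}) - \frac{1}{mn}\sum_{i=1}^{m}\sum_{j=1}^{n}\ln\!\left(1-\frac{i r_b + j r_w}{R^{(l-1)}_{th}}\right). \] Then the sequence $(R^{(l)}_{th})_{l\ge0}$ converges, and its limit $R_{th\_array}$ is a solution of the equation \[ \ln(R_{th0})=\frac{1}{mn}\sum_{i=1}^{m}\sum_{j=1}^{n}\ln\big(R_{th\_array}-i r_b-j r_w\big). \]
   Context: This iteration is the paper's "STMC threshold solver algorithm" for computing a single read resistance threshold for an $m\times n$ crossbar memory array with wordline interconnect resistance $r_w$ and bitline interconnect resistance $r_b$ per cell; $R_{th0}$ is the optimal read resistance threshold when line resistance is ignored. (The paper's algorithm also stops after a fixed number of iterations or when successive iterates differ by at most a tolerance $\epsilon$; the lemma concerns the limit of the unstopped iteration.) *)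

theory Defs
  imports "HOL-Analysis.Analysis"
begin

primrec stmc_iter :: "nat \<Rightarrow> nat \<Rightarrow> real \<Rightarrow> real \<Rightarrow> real \<Rightarrow> nat \<Rightarrow> real" where
  "stmc_iter m n rb rw Rth0 0 = Rth0"
| "stmc_iter m n rb rw Rth0 (Suc l) =
     exp (ln Rth0 - (1 / (real m * real n)) *
       (\<Sum>i=1..m. \<Sum>j=1..n.
          ln (1 - (real i * rb + real j * rw) / stmc_iter m n rb rw Rth0 l)))"

end

theory Submission
  imports Defs
begin


lemma bern:
  fixes u s :: real assumes "u > 0" "0 \<le> s" "s \<le> 1"
  shows "u powr s \<le> 1 + s * (u - 1)"
proof -
  have "exp ((1 - s) *\<^sub>R 0 + s *\<^sub>R ln u) \<le> (1 - s) * exp 0 + s * exp (ln u)"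
    using convex_onD[OF exp_convex, of s 0 "ln u"] assms by simp
  then show ?thesis using assms by (simp add: powr_def algebra_simps)
qed

lemma conc:
  fixes l b s :: real assumes "0 \<le> l" "l \<le> 1" "0 < b" "0 \<le> s" "s \<le> 1"
  shows "(1 - l) + l * b powr s \<le> (1 - l + l * b) powr s"
proof -
  define X where "X = 1 - l + l * b"
  have X: "X > 0" unfolding X_def using assms
    by (smt (verit, best) mult_nonneg_nonneg mult_pos_pos)
  have b1: "(1 / X) powr s \<le> 1 + s * (1 / X - 1)" using bern[of "1/X" s] X assms by simp
  have b2: "(b / X) powr s \<le> 1 + s * (b / X - 1)" using bern[of "b/X" s] X assms by simp
  have "(1 - l) * (1 / X) powr s + l * (b / X) powr s
      \<le> (1 - l) * (1 + s * (1 / X - 1)) + l * (1 + s * (b / X - 1))"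
    using b1 b2 assms by (intro add_mono mult_left_mono) auto
  also have "\<dots> = 1 + s * ((1 - l + l * b) / X - 1)" using X by (simp add: field_simps)
  also have "\<dots> = 1" using X by (simp add: X_def)
  finally have "(1 - l) * (1 / X) powr s + l * (b / X) powr s \<le> 1" .
  moreover have "(1 / X) powr s = 1 / X powr s" using X by (simp add: powr_divide)
  moreover have "(b / X) powr s = b powr s / X powr s" using X assms by (simp add: powr_divide)
  ultimately have "((1 - l) + l * b powr s) / X powr s \<le> 1"
    by (simp add: add_divide_distrib)
  then show ?thesis using X by (simp add: X_def divide_le_eq)
qed

lemma key:
  fixes P Q z :: real assumes "0 < P" "P < Q" "Q < 1" "0 < z" "z < 1"
  shows "ln (1 - z * Q) * ln (1 - P) \<le> ln (1 - z * P) * ln (1 - Q)"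
proof -
  define s where "s = ln (1 - z * P) / ln (1 - P)"
  have zP: "z * P < P" using assms by simp
  have zQ: "z * Q < Q" using assms by simp
  have lP: "ln (1 - P) < 0" using assms by simp
  have zQ1: "z * Q < 1" using zQ assms by linarith
  have zP0: "0 < z * P" using assms by simp
  have zP1: "z * P < 1" using assms zP by linarith
  have lzP: "ln (1 - z * P) < 0" using assms zP zP0 by simp
  have lzP2: "ln (1 - P) < ln (1 - z * P)" using assms zP zP0 zP1 by (subst ln_less_cancel_iff) auto
  have s0: "0 \<le> s" unfolding s_def using lP lzP by (simp add: divide_nonpos_neg)
  have s1: "s \<le> 1" unfolding s_def using lP lzP2 by (simp add: divide_le_eq_1)
  have e1: "(1 - P) powr s = 1 - z * P"
    using assms lP zP1 unfolding s_def powr_def by simp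
  have "(1 - P/Q) + (P/Q) * (1 - Q) powr s \<le> (1 - P/Q + (P/Q) * (1 - Q)) powr s"
    using conc[of "P/Q" "1 - Q" s] assms s0 s1 by simp
  also have "1 - P/Q + (P/Q) * (1 - Q) = 1 - P" using assms by (simp add: field_simps)
  finally have "(1 - P/Q) + (P/Q) * (1 - Q) powr s \<le> 1 - z * P" using e1 by simp
  then have "Q * ((1 - P/Q) + (P/Q) * (1 - Q) powr s) \<le> Q * (1 - z * P)"
    using assms by (intro mult_left_mono) auto
  moreover have "Q * ((1 - P/Q) + (P/Q) * (1 - Q) powr s) = Q - P + P * (1 - Q) powr s"
    using assms by (simp add: field_simps)
  moreover have "Q * (1 - z * P) = Q - P * (z * Q)" by (simp add: algebra_simps)
  ultimately have "P * (1 - Q) powr s \<le> P * (1 - z * Q)" by (simp add: algebra_simps)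
  then have A: "(1 - Q) powr s \<le> 1 - z * Q" using assms by simp
  have "s * ln (1 - Q) = ln ((1 - Q) powr s)" using assms by (simp add: ln_powr)
  also have "\<dots> \<le> ln (1 - z * Q)" using A assms zQ1 by (subst ln_le_cancel_iff) auto
  finally have "s * ln (1 - Q) \<le> ln (1 - z * Q)" .
  then have "ln (1 - z * Q) * ln (1 - P) \<le> s * ln (1 - Q) * ln (1 - P)"
    using lP by (simp add: mult_right_mono_neg)
  also have "\<dots> = ln (1 - z * P) * ln (1 - Q)" unfolding s_def using lP by simp
  finally show ?thesis .
qed

lemma l1:
  fixes t :: real assumes "1/2 < t" "t < 1"
  shows "(1 - t) * ln (1 - t) < t * ln t"
proof -
  define r where "r = (1 - t) / t"
  have r0: "0 < r" and r1: "r < 1" using assms by (auto simp: r_def field_simps)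
  have t: "t = 1 / (1 + r)" using assms by (simp add: r_def field_simps)
  have a: "- ln r > 1 - r" using r0 r1 ln_le_minus_one[of r]
    by (smt (verit, ccfv_threshold) ln_less_self ln_one ln_less_cancel_iff  ln_le_minus_one ln_eq_minus_one)
  have b: "ln (1 + r) \<le> r" using r0 by (simp add: ln_add_one_self_le_self)
  have c: "- r * ln r > (1 - r) * ln (1 + r)"
  proof -
    have "(1 - r) * ln (1 + r) \<le> (1 - r) * r" using b r1 by (intro mult_left_mono) auto
    also have "\<dots> < r * (- ln r)" using mult_strict_left_mono[OF a r0] by (simp add: mult.commute)
    finally show ?thesis by simp
  qed
  have "1 - t = r / (1 + r)" using t r0 by (simp add: field_simps)
  have lt: "ln t = - ln (1 + r)" using t r0 by (simp add: ln_div)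
  have l1t: "ln (1 - t) = ln r - ln (1 + r)" using \<open>1 - t = r / (1 + r)\<close> r0 by (simp add: ln_div)
  have "t * ln t - (1 - t) * ln (1 - t) = t * (- ln (1 + r)) - (1 - t) * (ln r - ln (1 + r))"
    by (simp add: lt l1t)
  also have "\<dots> = (1/(1+r)) * (- ln(1+r)) - (r/(1+r)) * (ln r - ln(1+r))"
    using t \<open>1 - t = r / (1 + r)\<close> by simp
  also have "\<dots> = (- ln(1+r) - r*(ln r - ln(1+r)))/(1+r)" by (simp add: diff_divide_distrib)
  also have "\<dots> = (- r * ln r - (1 - r) * ln (1 + r)) / (1 + r)" by (simp add: algebra_simps)
  finally have "t * ln t - (1 - t) * ln (1 - t) = (- r * ln r - (1 - r) * ln (1 + r)) / (1 + r)" .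
  moreover have "(- r * ln r - (1 - r) * ln (1 + r)) / (1 + r) > 0" using c r0 by simp
  ultimately show ?thesis by simp
qed

lemma hdec:
  fixes x y :: real assumes "1/2 \<le> x" "x < y" "y < 1"
  shows "ln y * ln (1 - y) < ln x * ln (1 - x)"
proof -
  have "\<exists>c. x < c \<and> c < y \<and> (ln y * ln (1 - y) - ln x * ln (1 - x)
     = (y - x) * (ln (1 - c) / c - ln c / (1 - c)))"
    using assms
    by (intro MVT2) (auto intro!: derivative_eq_intros simp: field_simps)
  then obtain c where c: "x < c" "c < y" and eq: "ln y * ln (1 - y) - ln x * ln (1 - x)
     = (y - x) * (ln (1 - c) / c - ln c / (1 - c))" by blast
  have c1: "1/2 < c" "c < 1" using c assms by auto
  have "(1 - c) * ln (1 - c) < c * ln c" using l1 c1 by simp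
  then have "ln (1 - c) / c < ln c / (1 - c)" using c1 by (simp add: field_simps)
  then have "(y - x) * (ln (1 - c) / c - ln c / (1 - c)) < 0" using assms
    by (simp add: mult_pos_neg)
  then show ?thesis using eq by simp
qed

lemma hlem:
  fixes P Q :: real assumes "0 < P" "P < Q" "Q < 1" "P + Q > 1"
  shows "ln Q * ln (1 - Q) < ln P * ln (1 - P)"
proof (cases "P \<ge> 1/2")
  case True then show ?thesis using hdec assms by simp
next
  case False
  then have "ln Q * ln (1 - Q) < ln (1 - P) * ln (1 - (1 - P))" using hdec[of "1 - P" Q] assms by simp
  then show ?thesis by (simp add: mult.commute)
qed



definition GG :: "'k set \<Rightarrow> ('k \<Rightarrow> real) \<Rightarrow> ('k \<Rightarrow> real) \<Rightarrow> real \<Rightarrow> real" where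
  "GG K w z E = exp (\<Sum>k\<in>K. w k * ln (1 - z k * E))"

locale gsetup =
  fixes K :: "'k set" and w z :: "'k \<Rightarrow> real"
  assumes fin: "finite K" and ne: "K \<noteq> {}" and wpos: "\<And>k. k \<in> K \<Longrightarrow> w k > 0"
    and wsum: "sum w K = 1" and zpos: "\<And>k. k \<in> K \<Longrightarrow> z k > 0"
    and zlt: "\<And>k. k \<in> K \<Longrightarrow> z k < 1"
begin

abbreviation "G \<equiv> GG K w z"

lemma G_pos: "G E > 0" by (simp add: GG_def)

lemma G_le1: assumes "0 \<le> E" "E \<le> 1" shows "G E \<le> 1"
proof -
  have "(\<Sum>k\<in>K. w k * ln (1 - z k * E)) \<le> 0"
  proof (intro sum_nonpos)
    fix k assume k: "k \<in> K"
    have "z k * E \<le> z k" using assms zpos[OF k] by (simp add: mult_left_le)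
    moreover have "0 \<le> z k * E" using zpos[OF k] assms by simp
    ultimately have "0 < 1 - z k * E" "1 - z k * E \<le> 1" using zlt[OF k] by linarith+
    then have "ln (1 - z k * E) \<le> 0" by simp
    then show "w k * ln (1 - z k * E) \<le> 0" using wpos[OF k] by (simp add: mult_nonneg_nonpos)
  qed
  then show ?thesis by (simp add: GG_def)
qed

lemma G_anti: assumes "0 \<le> x" "x \<le> y" "y \<le> 1" shows "G y \<le> G x"
proof -
  have "(\<Sum>k\<in>K. w k * ln (1 - z k * y)) \<le> (\<Sum>k\<in>K. w k * ln (1 - z k * x))"
  proof (intro sum_mono)
    fix k assume k: "k \<in> K"
    have "z k * y \<le> z k" using assms zpos[OF k] by (simp add: mult_left_le)
    then have a: "0 < 1 - z k * y" using zlt[OF k] by linarith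
    have "z k * x \<le> z k * y" using assms zpos[OF k] by (simp add: mult_left_mono)
    then have "ln (1 - z k * y) \<le> ln (1 - z k * x)" using a by simp
    then show "w k * ln (1 - z k * y) \<le> w k * ln (1 - z k * x)" using wpos[OF k] by (simp add: mult_left_mono)
  qed
  then show ?thesis by (simp add: GG_def)
qed

lemma G_lt1: assumes "0 \<le> E" "E \<le> 1" "E > 0" shows "G E < 1"
proof -
  have "0 < (\<Sum>k\<in>K. - (w k * ln (1 - z k * E)))"
  proof (intro sum_pos)
    show "finite K" by (rule fin)
    show "K \<noteq> {}" by (rule ne)
  next
    fix k assume k: "k \<in> K"
    have "z k * E \<le> z k" using assms zpos[OF k] by (simp add: mult_left_le)
    moreover have "z k * E > 0" using assms zpos[OF k] by simp
    ultimately have "0 < 1 - z k * E" "1 - z k * E < 1" using zlt[OF k] by linarith+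
    then have "ln (1 - z k * E) < 0" by simp
    then show "0 < - (w k * ln (1 - z k * E))" using wpos[OF k] by (simp add: mult_pos_neg)
  qed
  then show ?thesis by (simp add: GG_def sum_negf)
qed

lemma ln_G: "ln (G E) = (\<Sum>k\<in>K. w k * ln (1 - z k * E))" by (simp add: GG_def)

lemma nocycle:
  assumes "0 < P" "P < Q" "Q \<le> 1" "G P = Q" "G Q = P"
  shows False
proof -
  have Q1: "Q < 1" using G_lt1[of P] assms by simp
  have eQ: "ln Q = (\<Sum>k\<in>K. w k * ln (1 - z k * P))" using ln_G[of P] assms by simp
  have eP: "ln P = (\<Sum>k\<in>K. w k * ln (1 - z k * Q))" using ln_G[of Q] assms by simp
  have zb: "\<And>k (x::real). k \<in> K \<Longrightarrow> 0 \<le> x \<Longrightarrow> x < 1 \<Longrightarrow> 0 < 1 - z k * x"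
  proof -
    fix k and x :: real assume k: "k \<in> K" and x: "0 \<le> x" "x < 1"
    have "z k * x \<le> z k" using x zpos[OF k] by (simp add: mult_left_le)
    then show "0 < 1 - z k * x" using zlt[OF k] by linarith
  qed
  have PQ: "P + Q > 1"
  proof (rule ccontr)
    assume "\<not> P + Q > 1"
    then have s: "P + Q \<le> 1" by simp
    have "(\<Sum>k\<in>K. w k * (ln (1 - z k * P) - ln (1 - z k * Q))) < (\<Sum>k\<in>K. w k * (ln Q - ln P))"
    proof (rule sum_strict_mono_ex1)
      show "finite K" by (rule fin)
      have each: "w k * (ln (1 - z k * P) - ln (1 - z k * Q)) < w k * (ln Q - ln P)" if k: "k \<in> K" for k
      proof -
        have a: "0 < 1 - z k * P" "0 < 1 - z k * Q" using zb[OF k] assms Q1 by auto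
        have "z k * (P + Q) < P + Q" using zlt[OF k] assms by simp
        then have "z k * (P + Q) < 1" using s by linarith
        then have "(1 - z k * P) * P < (1 - z k * Q) * Q"
        proof -
          have "(1 - z k * Q) * Q - (1 - z k * P) * P = (Q - P) * (1 - z k * (P + Q))"
            by (simp add: algebra_simps)
          moreover have "(Q - P) * (1 - z k * (P + Q)) > 0"
            using \<open>z k * (P + Q) < 1\<close> assms by simp
          ultimately show ?thesis by simp
        qed
        then have "ln ((1 - z k * P) * P) < ln ((1 - z k * Q) * Q)"
          using a assms by (subst ln_less_cancel_iff) auto
        then have "ln (1 - z k * P) + ln P < ln (1 - z k * Q) + ln Q"
          using a assms by (simp add: ln_mult)
        then show ?thesis using wpos[OF k] by (intro mult_strict_left_mono) auto
      qed
      show "\<forall>k\<in>K. w k * (ln (1 - z k * P) - ln (1 - z k * Q)) \<le> w k * (ln Q - ln P)"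
        using each by (simp add: less_imp_le)
      from ne obtain k where "k \<in> K" by blast
      then show "\<exists>k\<in>K. w k * (ln (1 - z k * P) - ln (1 - z k * Q)) < w k * (ln Q - ln P)"
        using each by blast
    qed
    also have "(\<Sum>k\<in>K. w k * (ln Q - ln P)) = ln Q - ln P"
      using wsum by (simp add: sum_distrib_right[symmetric])
    also have "(\<Sum>k\<in>K. w k * (ln (1 - z k * P) - ln (1 - z k * Q))) = ln Q - ln P"
      using eQ eP by (simp add: right_diff_distrib sum_subtractf)
    finally show False by simp
  qed
  have "(\<Sum>k\<in>K. w k * (ln (1 - z k * Q) * ln (1 - P))) \<le> (\<Sum>k\<in>K. w k * (ln (1 - z k * P) * ln (1 - Q)))"
  proof (intro sum_mono)
    fix k assume k: "k \<in> K"
    have "ln (1 - z k * Q) * ln (1 - P) \<le> ln (1 - z k * P) * ln (1 - Q)"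
      using key[of P Q "z k"] assms Q1 zpos[OF k] zlt[OF k] by simp
    then show "w k * (ln (1 - z k * Q) * ln (1 - P)) \<le> w k * (ln (1 - z k * P) * ln (1 - Q))"
      using wpos[OF k] by (intro mult_left_mono) auto
  qed
  then have "ln P * ln (1 - P) \<le> ln Q * ln (1 - Q)"
    unfolding eP eQ by (simp add: sum_distrib_right mult.assoc)
  moreover have "ln Q * ln (1 - Q) < ln P * ln (1 - P)" using hlem assms Q1 PQ by simp
  ultimately show False by simp
qed

end


context gsetup begin

lemma G_tendsto:
  assumes f: "f \<longlonglongrightarrow> x" and x: "0 \<le> x" "x \<le> 1"
  shows "(\<lambda>l. G (f l)) \<longlonglongrightarrow> G x"
  unfolding GG_def
proof (intro tendsto_exp tendsto_sum tendsto_mult tendsto_const tendsto_ln tendsto_diff f)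
  fix k assume k: "k \<in> K"
  have "z k * x \<le> z k" using x zpos[OF k] by (simp add: mult_left_le)
  then show "1 - z k * x \<noteq> 0" using zlt[OF k] by linarith
qed

lemma conv:
  assumes e0: "e 0 = 1" and es: "\<And>l. e (Suc l) = G (e l)"
  shows "\<exists>A. e \<longlonglongrightarrow> A \<and> 0 < A \<and> A \<le> 1 \<and> G A = A"
proof -
  have rng: "0 < e l \<and> e l \<le> 1" for l
    by (induction l) (auto simp: e0 es G_pos G_le1)
  define g1 where "g1 = G 1"
  have g1: "0 < g1" by (simp add: g1_def G_pos)
  have lb: "g1 \<le> e l" for l
  proof (cases l)
    case 0 then show ?thesis using G_le1[of 1] by (simp add: e0 g1_def)
  next
    case (Suc k) then show ?thesis using rng[of k] G_anti[of "e k" 1] by (simp add: es g1_def)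
  qed
  have mono: "e (2*l+2) \<le> e (2*l) \<and> e (2*l+1) \<le> e (2*l+3)" for l
  proof (induction l)
    case 0
    have a: "e 2 \<le> e 0" using rng[of 2] e0 by simp
    have "e 3 = G (e 2)" by (simp add: es numeral_3_eq_3 numeral_2_eq_2)
    moreover have "e 1 = G (e 0)" by (simp add: es)
    ultimately have "e 1 \<le> e 3" using G_anti[of "e 2" "e 0"] a rng[of 2] e0 by simp
    then show ?case using a by (simp add: numeral_2_eq_2 numeral_3_eq_3)
  next
    case (Suc l)
    have h1: "e (2*l+4) = G (e (2*l+3))" using es[of "2*l+3"] by (simp add: eval_nat_numeral)
    have h2: "e (2*l+2) = G (e (2*l+1))" using es[of "2*l+1"] by (simp add: eval_nat_numeral)
    have "G (e (2*l+3)) \<le> G (e (2*l+1))"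
      by (rule G_anti) (use rng[of "2*l+1"] rng[of "2*l+3"] Suc.IH in auto)
    then have a: "e (2*l+4) \<le> e (2*l+2)" unfolding h1 h2 .
    have h3: "e (2*l+5) = G (e (2*l+4))" using es[of "2*l+4"] by (simp add: eval_nat_numeral)
    have h4: "e (2*l+3) = G (e (2*l+2))" using es[of "2*l+2"] by (simp add: eval_nat_numeral)
    have "G (e (2*l+2)) \<le> G (e (2*l+4))"
      by (rule G_anti) (use rng[of "2*l+2"] rng[of "2*l+4"] a in auto)
    then have b: "e (2*l+3) \<le> e (2*l+5)" unfolding h3 h4 .
    show ?case using a b by (simp add: eval_nat_numeral)
  qed
  have dec: "decseq (\<lambda>l. e (2*l))"
    by (rule decseq_SucI) (use mono in \<open>simp add: eval_nat_numeral\<close>)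
  have inc: "incseq (\<lambda>l. e (2*l+1))"
    by (rule incseq_SucI) (use mono in \<open>simp add: eval_nat_numeral\<close>)
  obtain A where A: "(\<lambda>l. e (2*l)) \<longlonglongrightarrow> A" "\<forall>i. A \<le> e (2*i)"
    using decseq_convergent[OF dec, of g1] lb by blast
  obtain B where B: "(\<lambda>l. e (2*l+1)) \<longlonglongrightarrow> B" "\<forall>i. e (2*i+1) \<le> B"
    using incseq_convergent[OF inc, of 1] rng by blast
  have A1: "g1 \<le> A" using LIMSEQ_le_const[OF A(1)] lb by blast
  have A2: "A \<le> 1" using LIMSEQ_le_const2[OF A(1)] rng by blast
  have B1: "g1 \<le> B" using LIMSEQ_le_const[OF B(1)] lb by blast
  have B2: "B \<le> 1" using LIMSEQ_le_const2[OF B(1)] rng by blast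
  have "(\<lambda>l. G (e (2*l))) \<longlonglongrightarrow> G A" using G_tendsto[OF A(1)] A1 A2 g1 by simp
  moreover have "(\<lambda>l. G (e (2*l))) = (\<lambda>l. e (2*l+1))" by (simp add: es)
  ultimately have BA: "G A = B" using B(1) LIMSEQ_unique by metis
  have "(\<lambda>l. G (e (2*l+1))) \<longlonglongrightarrow> G B" using G_tendsto[OF B(1)] B1 B2 g1 by simp
  moreover have "(\<lambda>l. G (e (2*l+1))) = (\<lambda>l. e (2*(Suc l)))" by (simp add: es)
  moreover have "(\<lambda>l. e (2*(Suc l))) \<longlonglongrightarrow> A" using LIMSEQ_Suc[OF A(1)] by simp
  ultimately have AB: "G B = A" using LIMSEQ_unique by metis
  have "A = B"
  proof (rule ccontr)
    assume "A \<noteq> B"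
    then consider "A < B" | "B < A" by linarith
    then show False
    proof cases
      case 1 then show False using nocycle[of A B] BA AB A1 B2 g1 by simp
    next
      case 2 then show False using nocycle[of B A] BA AB B1 A2 g1 by simp
    qed
  qed
  have "e \<longlonglongrightarrow> A"
    unfolding tendsto_def
  proof (intro allI impI)
    fix S assume "open S" "A \<in> S"
    then have ev1: "eventually (\<lambda>l. e (2*l) \<in> S) sequentially"
      and ev2: "eventually (\<lambda>l. e (2*l+1) \<in> S) sequentially"
      using A(1) B(1) \<open>A = B\<close> by (auto simp: tendsto_def)
    from ev1 obtain N1 where N1: "\<And>l. l \<ge> N1 \<Longrightarrow> e (2*l) \<in> S" by (auto simp: eventually_sequentially)
    from ev2 obtain N2 where N2: "\<And>l. l \<ge> N2 \<Longrightarrow> e (2*l+1) \<in> S" by (auto simp: eventually_sequentially)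
    show "eventually (\<lambda>l. e l \<in> S) sequentially"
      unfolding eventually_sequentially
    proof (intro exI allI impI)
      fix n assume n: "2 * N1 + 2 * N2 \<le> n"
      show "e n \<in> S"
      proof (cases "even n")
        case True then obtain l where "n = 2*l" by blast
        then show ?thesis using N1[of l] n by simp
      next
        case False then obtain l where "n = 2*l+1" using oddE by blast
        then show ?thesis using N2[of l] n by simp
      qed
    qed
  qed
  then show ?thesis using A1 A2 g1 BA \<open>A = B\<close> by auto
qed

end


lemma dsum: "(1 / (real m * real n)) * (\<Sum>i=1..m. \<Sum>j=1..n. f i j)
   = (\<Sum>k\<in>{1..m}\<times>{1..n}. (1 / (real m * real n)) * f (fst k) (snd k))"
  by (simp add: sum.cartesian_product sum_distrib_left case_prod_beta)

theorem lemma1: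
  fixes m n :: nat and rb rw Rth0 :: real
  assumes "m > 0" and "n > 0" and "rb > 0" and "rw > 0" and "Rth0 > 0"
    and "Rth0 > real m * rb + real n * rw"
  shows "\<exists>Rarr. stmc_iter m n rb rw Rth0 \<longlonglongrightarrow> Rarr \<and> Rarr > real m * rb + real n * rw \<and>
           ln Rth0 = (1 / (real m * real n)) *
             (\<Sum>i=1..m. \<Sum>j=1..n. ln (Rarr - real i * rb - real j * rw))"
proof -
  define K where "K = {1..m}\<times>{1..n}"
  define w :: "nat \<times> nat \<Rightarrow> real" where "w = (\<lambda>_. 1 / (real m * real n))"
  define c :: "nat \<times> nat \<Rightarrow> real" where "c = (\<lambda>k. real (fst k) * rb + real (snd k) * rw)"
  define z where "z = (\<lambda>k. c k / Rth0)"
  have cbd: "0 < c k \<and> c k < Rth0" if kK: "k \<in> K" for k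
  proof -
    obtain i j where k: "k = (i, j)" "1 \<le> i" "i \<le> m" "1 \<le> j" "j \<le> n"
      using kK by (cases k) (auto simp: K_def)
    have "real i * rb \<le> real m * rb" using k assms by (intro mult_right_mono) auto
    moreover have "real j * rw \<le> real n * rw" using k assms by (intro mult_right_mono) auto
    moreover have "0 < real i * rb" using k assms by simp
    moreover have "0 < real j * rw" using k assms by simp
    moreover have "c k = real i * rb + real j * rw" by (simp add: c_def k)
    ultimately show ?thesis using assms by linarith
  qed
  interpret gsetup K w z
  proof
    show "finite K" by (simp add: K_def)
    show "K \<noteq> {}" using assms by (auto simp: K_def)
    show "\<And>k. k \<in> K \<Longrightarrow> 0 < w k" using assms by (simp add: w_def)
    show "sum w K = 1" using assms by (simp add: w_def K_def)
    show "\<And>k. k \<in> K \<Longrightarrow> 0 < z k" using cbd assms by (simp add: z_def)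
    show "\<And>k. k \<in> K \<Longrightarrow> z k < 1" using cbd assms by (simp add: z_def)
  qed
  define R where "R = stmc_iter m n rb rw Rth0"
  have Rpos: "R l > 0" for l by (cases l) (auto simp: R_def assms)
  define e where "e = (\<lambda>l. Rth0 / R l)"
  have e0: "e 0 = 1" using assms by (simp add: e_def R_def)
  have es: "e (Suc l) = G (e l)" for l
  proof -
    define S where "S = (\<Sum>k\<in>K. w k * ln (1 - z k * e l))"
    have "(1 / (real m * real n)) * (\<Sum>i=1..m. \<Sum>j=1..n.
          ln (1 - (real i * rb + real j * rw) / R l)) = S"
      unfolding dsum S_def K_def w_def
    proof (intro sum.cong refl)
      fix k assume "k \<in> {1..m}\<times>{1..n}"
      have "(real (fst k) * rb + real (snd k) * rw) / R l = z k * e l"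
        using assms Rpos[of l] by (simp add: z_def c_def e_def)
      then show "1 / (real m * real n) * ln (1 - (real (fst k) * rb + real (snd k) * rw) / R l)
        = 1 / (real m * real n) * ln (1 - z k * e l)" by simp
    qed
    then have "R (Suc l) = exp (ln Rth0 - S)" by (simp add: R_def)
    then have "e (Suc l) = Rth0 / exp (ln Rth0 - S)" by (simp add: e_def)
    also have "\<dots> = exp S" using assms by (simp add: exp_diff)
    finally show ?thesis by (simp add: GG_def S_def)
  qed
  obtain A where A: "e \<longlonglongrightarrow> A" "0 < A" "A \<le> 1" "G A = A"
    using conv[of e] e0 es by blast
  define Rarr where "Rarr = Rth0 / A"
  have Req: "R = (\<lambda>l. Rth0 / e l)" using Rpos assms by (auto simp: e_def)
  have lim: "R \<longlonglongrightarrow> Rarr" unfolding Req Rarr_def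
    using A by (intro tendsto_intros) auto
  have RR: "Rth0 \<le> Rarr" using A assms by (simp add: Rarr_def field_simps)
  have "ln A = (\<Sum>k\<in>K. w k * ln (1 - z k * A))" using ln_G[of A] A by simp
  also have "\<dots> = (\<Sum>k\<in>K. w k * (ln (Rarr - c k) - ln Rarr))"
  proof (intro sum.cong refl)
    fix k assume k: "k \<in> K"
    have "1 - z k * A = (Rarr - c k) / Rarr" using A assms by (simp add: z_def Rarr_def field_simps)
    moreover have "Rarr - c k > 0" using cbd[OF k] RR by simp
    moreover have "Rarr > 0" using RR assms by simp
    ultimately show "w k * ln (1 - z k * A) = w k * (ln (Rarr - c k) - ln Rarr)" by (simp add: ln_div)
  qed
  also have "\<dots> = (\<Sum>k\<in>K. w k * ln (Rarr - c k)) - ln Rarr"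
    using wsum by (simp add: right_diff_distrib sum_subtractf sum_distrib_right[symmetric])
  finally have "ln A = (\<Sum>k\<in>K. w k * ln (Rarr - c k)) - ln Rarr" .
  moreover have "ln A = ln Rth0 - ln Rarr" using A assms by (simp add: Rarr_def ln_div)
  ultimately have "ln Rth0 = (\<Sum>k\<in>K. w k * ln (Rarr - c k))" by simp
  also have "\<dots> = (1 / (real m * real n)) *
             (\<Sum>i=1..m. \<Sum>j=1..n. ln (Rarr - real i * rb - real j * rw))"
    unfolding dsum K_def w_def c_def by (simp add: algebra_simps)
  finally have eq: "ln Rth0 = (1 / (real m * real n)) *
             (\<Sum>i=1..m. \<Sum>j=1..n. ln (Rarr - real i * rb - real j * rw))" .
  show ?thesis using lim eq RR assms unfolding R_def by (intro exI[of _ Rarr]) auto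
qed


end
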